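(* Let $X$ be a real random variable and let $Y_1\sim\mathcal{N}(0,\sigma_{Y_1}^2)$, $Y_2\sim\mathcal{N}(0,\sigma_{Y_2}^2)$ with $\sigma_{Y_1}>\sigma_{Y_2}\ge0$, where $X$ is independent of $Y_1$ and $X$ is independent of $Y_2$. Then for all $\varepsilon\in\mathbb{R}$, $$\mathbb{P}[X+|Y_1|\le\varepsilon]\le\mathbb{P}[X+|Y_2|\le\varepsilon].$$
   Context: $\mathcal{N}(0,0)$ denotes the point mass at $0$. *)

theory Defs
  imports "HOL-Probability.Probability"
begin

text \<open>Centered normal law with standard deviation s (variance s^2) on the reals;
  for s = 0 it is the point mass at 0 (the paper's convention N(0,0)).\<close>
definition centered_normal :: "real \<Rightarrow> real measure" where
  "centered_normal s =
     (if s = 0 then return borel 0 else density lborel (normal_density 0 s))"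

end

theory Submission
  imports Defs
begin

lemma nd_scale:
  assumes "s > 0"
  shows "s * normal_density 0 s (s * z) = normal_density 0 1 z"
proof -
  have "sqrt (2 * pi * s\<^sup>2) = s * sqrt (2*pi)"
    using assms by (simp add: real_sqrt_mult power2_eq_square mult_ac)
  moreover have "(s*z)\<^sup>2 / (2 * s\<^sup>2) = z\<^sup>2 / 2"
    using assms by (simp add: power2_eq_square field_simps)
  ultimately show ?thesis using assms
    by (simp add: normal_density_def field_simps)
qed

lemma cn_pos:
  assumes "s > 0"
  shows "emeasure (centered_normal s) {y. \<bar>y\<bar> \<le> t}
    = (\<integral>\<^sup>+z. ennreal (normal_density 0 1 z) * indicator {y. \<bar>y\<bar> \<le> t} (s*z) \<partial>lborel)"
proof -
  have "emeasure (centered_normal s) {y. \<bar>y\<bar> \<le> t}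
     = (\<integral>\<^sup>+y. ennreal (normal_density 0 s y) * indicator {y. \<bar>y\<bar> \<le> t} y \<partial>lborel)"
    using assms unfolding centered_normal_def
    by (simp add: emeasure_density)
  also have "\<dots> = ennreal \<bar>s\<bar> * (\<integral>\<^sup>+z. ennreal (normal_density 0 s (0 + s*z)) * indicator {y. \<bar>y\<bar> \<le> t} (0 + s*z) \<partial>lborel)"
    by (rule nn_integral_real_affine) (use assms in auto)
  also have "\<dots> = (\<integral>\<^sup>+z. ennreal \<bar>s\<bar> * (ennreal (normal_density 0 s (s*z)) * indicator {y. \<bar>y\<bar> \<le> t} (s*z)) \<partial>lborel)"
    by (subst nn_integral_cmult) auto
  also have "\<dots> = (\<integral>\<^sup>+z. ennreal (normal_density 0 1 z) * indicator {y. \<bar>y\<bar> \<le> t} (s*z) \<partial>lborel)"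
  proof (rule nn_integral_cong)
    fix z
    have "ennreal \<bar>s\<bar> * ennreal (normal_density 0 s (s*z)) = ennreal (normal_density 0 1 z)"
      using assms nd_scale[OF assms, of z] by (simp add: ennreal_mult'[symmetric])
    then show "ennreal \<bar>s\<bar> * (ennreal (normal_density 0 s (s*z)) * indicator {y. \<bar>y\<bar> \<le> t} (s*z))
      = ennreal (normal_density 0 1 z) * indicator {y. \<bar>y\<bar> \<le> t} (s*z)"
      by (metis mult.assoc)
  qed
  finally show ?thesis .
qed

lemma key:
  assumes "0 \<le> s2" "s2 < s1"
  shows "emeasure (centered_normal s1) {y. \<bar>y\<bar> \<le> t} \<le> emeasure (centered_normal s2) {y. \<bar>y\<bar> \<le> t}"
proof (cases "s2 = 0")
  case True
  have s1: "s1 > 0" using assms by auto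
  interpret p: prob_space "centered_normal s1"
    using s1 prob_space_normal_density[of s1 0] by (simp add: centered_normal_def)
  show ?thesis
  proof (cases "t \<ge> 0")
    case True
    with \<open>s2 = 0\<close> have "emeasure (centered_normal s2) {y. \<bar>y\<bar> \<le> t} = 1"
      by (simp add: centered_normal_def)
    then show ?thesis using p.emeasure_le_1 by simp
  next
    case False
    then have "{y::real. \<bar>y\<bar> \<le> t} = {}" by auto
    then show ?thesis by simp
  qed
next
  case False
  then have s2: "s2 > 0" using assms by auto
  have s1: "s1 > 0" using assms by auto
  show ?thesis
    unfolding cn_pos[OF s1] cn_pos[OF s2]
  proof (rule nn_integral_mono)
    fix z
    have "\<bar>s2*z\<bar> \<le> \<bar>s1*z\<bar>" using assms by (simp add: abs_mult mult_right_mono)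
    then have "indicator {y. \<bar>y\<bar> \<le> t} (s1*z) \<le> (indicator {y. \<bar>y\<bar> \<le> t} (s2*z) :: ennreal)"
      by (auto simp: indicator_def)
    then show "ennreal (normal_density 0 1 z) * indicator {y. \<bar>y\<bar> \<le> t} (s1*z)
      \<le> ennreal (normal_density 0 1 z) * indicator {y. \<bar>y\<bar> \<le> t} (s2*z)"
      by (rule mult_left_mono) auto
  qed
qed

lemma repr:
  fixes M :: "'a measure" and X Y :: "'a \<Rightarrow> real"
  assumes "prob_space M" "prob_space.indep_var M borel X borel Y"
  shows "emeasure M {\<omega> \<in> space M. X \<omega> + \<bar>Y \<omega>\<bar> \<le> e}
    = (\<integral>\<^sup>+x. emeasure (distr M borel Y) {y. \<bar>y\<bar> \<le> e - x} \<partial>distr M borel X)"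
proof -
  interpret prob_space M by fact
  have ind: "indep_var borel X borel Y" by fact
  have rv: "random_variable borel X" "random_variable borel Y"
    and jd: "distr M (borel \<Otimes>\<^sub>M borel) (\<lambda>x. (X x, Y x)) = distr M borel X \<Otimes>\<^sub>M distr M borel Y"
    using ind unfolding indep_var_distribution_eq by auto
  define A where "A = {p::real\<times>real. fst p + \<bar>snd p\<bar> \<le> e}"
  have A: "A \<in> sets (borel \<Otimes>\<^sub>M borel)"
  proof -
    have "{p \<in> space (borel \<Otimes>\<^sub>M borel). fst p + \<bar>snd p\<bar> \<le> e} \<in> sets (borel \<Otimes>\<^sub>M borel :: (real\<times>real) measure)"
      by measurable
    then show ?thesis by (simp add: A_def space_pair_measure)
  qed
  have meas: "(\<lambda>x. (X x, Y x)) \<in> measurable M (borel \<Otimes>\<^sub>M borel)"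
    using rv by (auto intro: measurable_Pair)
  have "{\<omega> \<in> space M. X \<omega> + \<bar>Y \<omega>\<bar> \<le> e} = (\<lambda>x. (X x, Y x)) -` A \<inter> space M"
    by (auto simp: A_def)
  then have "emeasure M {\<omega> \<in> space M. X \<omega> + \<bar>Y \<omega>\<bar> \<le> e}
      = emeasure (distr M (borel \<Otimes>\<^sub>M borel) (\<lambda>x. (X x, Y x))) A"
    using emeasure_distr[OF meas A] by simp
  also have "\<dots> = emeasure (distr M borel X \<Otimes>\<^sub>M distr M borel Y) A" by (simp add: jd)
  also have "\<dots> = (\<integral>\<^sup>+x. emeasure (distr M borel Y) (Pair x -` A) \<partial>distr M borel X)"
  proof -
    interpret py: prob_space "distr M borel Y" using rv by (simp add: prob_space_distr)
    show ?thesis using A by (intro py.emeasure_pair_measure_alt) simp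
  qed
  also have "\<dots> = (\<integral>\<^sup>+x. emeasure (distr M borel Y) {y. \<bar>y\<bar> \<le> e - x} \<partial>distr M borel X)"
    by (rule nn_integral_cong) (auto simp: A_def intro!: arg_cong[where f="emeasure _"])
  finally show ?thesis .
qed

theorem lemma4:
  fixes M :: "'a measure" and X Y1 Y2 :: "'a \<Rightarrow> real"
    and s1 s2 \<epsilon> :: real
  assumes "prob_space M"
    and "X \<in> borel_measurable M" and "Y1 \<in> borel_measurable M" and "Y2 \<in> borel_measurable M"
    and "s2 \<ge> 0" and "s1 > s2"
    and "distr M borel Y1 = centered_normal s1"
    and "distr M borel Y2 = centered_normal s2"
    and "prob_space.indep_var M borel X borel Y1"
    and "prob_space.indep_var M borel X borel Y2"
  shows "measure M {\<omega> \<in> space M. X \<omega> + \<bar>Y1 \<omega>\<bar> \<le> \<epsilon>}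
           \<le> measure M {\<omega> \<in> space M. X \<omega> + \<bar>Y2 \<omega>\<bar> \<le> \<epsilon>}"
proof -
  interpret prob_space M by fact
  have "emeasure M {\<omega> \<in> space M. X \<omega> + \<bar>Y1 \<omega>\<bar> \<le> \<epsilon>}
      \<le> emeasure M {\<omega> \<in> space M. X \<omega> + \<bar>Y2 \<omega>\<bar> \<le> \<epsilon>}"
    unfolding repr[OF assms(1) assms(9)] repr[OF assms(1) assms(10)] assms(7,8)
    by (rule nn_integral_mono) (rule key[OF assms(5,6)])
  then show ?thesis
    by (simp add: emeasure_eq_measure)
qed

end
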